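(* Let $\sigma>0$, let $\mu_1,\ldots,\mu_n\in[0,1]$, and let $\mathcal{X}=\{x_1,\ldots,x_n\}\subseteq\mathbb{R}$ with $x_i=\mu_i+g_i$, where $g_1,\ldots,g_n$ are independent Gaussian random variables with mean $0$ and standard deviation $\sigma$. Then for every $\varepsilon>0$, the probability that $\mathcal{X}$ is not $\varepsilon$-spreaded is at most $\frac{2n^4\varepsilon^2}{\sigma^2}$.
   Context: $\mathcal{X}$ is $\varepsilon$-spreaded if (1) no interval of length $\varepsilon$ contains three or more points of $\mathcal{X}$, and (2) for any four points $x_1,x_2,x_3,x_4\in\mathcal{X}$, which are distinct except that $x_2$ and $x_3$ may be the same point, we have $|x_1-x_2|>\varepsilon$ or $|x_3-x_4|>\varepsilon$. *)

theory Defs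
  imports "HOL-Probability.Probability"
begin

definition spreaded :: "real \<Rightarrow> real set \<Rightarrow> bool" where
  "spreaded eps X \<longleftrightarrow>
     (\<forall>a::real. \<not> (3 \<le> card (X \<inter> {a..a+eps}) \<or> infinite (X \<inter> {a..a+eps}))) \<and>
     (\<forall>x1\<in>X. \<forall>x2\<in>X. \<forall>x3\<in>X. \<forall>x4\<in>X.
        (x1 \<noteq> x2 \<and> x1 \<noteq> x3 \<and> x1 \<noteq> x4 \<and> x2 \<noteq> x4 \<and> x3 \<noteq> x4) \<longrightarrow>
        (\<bar>x1 - x2\<bar> > eps \<or> \<bar>x3 - x4\<bar> > eps))"

definition gauss_vec :: "nat \<Rightarrow> real \<Rightarrow> (nat \<Rightarrow> real) measure" where
  "gauss_vec n s = PiM {..<n} (\<lambda>i. density lborel (normal_density 0 s))"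

end

theory Submission
  imports Defs
begin


lemma nd_le: fixes s x :: real assumes "s > 0" shows "normal_density 0 s x \<le> 1 / (2 * s)"
proof -
  have e: "exp (-(x - 0)\<^sup>2/ (2 * s\<^sup>2)) \<le> 1" by simp
  have "sqrt (2 * pi * s\<^sup>2) = sqrt (2 * pi) * s" using assms by (simp add: real_sqrt_mult)
  moreover have "sqrt (2 * pi) \<ge> 2" using pi_gt3 by (simp add: real_le_rsqrt)
  ultimately have "sqrt (2 * pi * s\<^sup>2) \<ge> 2 * s" using assms by (simp add: mult_right_mono)
  hence "1 / sqrt (2 * pi * s\<^sup>2) \<le> 1/(2 * s)" using assms by (simp add: frac_le)
  moreover have "1 / sqrt (2 * pi * s\<^sup>2) \<ge> 0" by simp
  ultimately show ?thesis unfolding normal_density_def using e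
    by (metis dual_order.trans exp_ge_zero mult_left_le mult_left_mono)
qed

lemma interval_bound:
  assumes "s > 0" "eps > 0"
  shows "emeasure (density lborel (normal_density 0 s)) {y. \<bar>y - t\<bar> \<le> eps} \<le> ennreal (eps/s)"
proof -
  have S: "{y. \<bar>y - t\<bar> \<le> eps} = {t-eps..t+eps}" by auto
  have "emeasure (density lborel (normal_density 0 s)) {t-eps..t+eps}
      = (\<integral>\<^sup>+x. ennreal (normal_density 0 s x) * indicator {t-eps..t+eps} x \<partial>lborel)"
    by (simp add: emeasure_density)
  also have "\<dots> \<le> (\<integral>\<^sup>+x. ennreal (1/(2 * s)) * indicator {t-eps..t+eps} x \<partial>lborel)"
    by (intro nn_integral_mono mult_right_mono) (auto simp: nd_le[OF assms(1)] ennreal_leI)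
  also have "\<dots> = ennreal (1/(2 * s)) * ennreal (2 * eps)"
    using assms by (simp add: nn_integral_cmult)
  also have "\<dots> = ennreal (eps/s)" using assms by (simp add: ennreal_mult[symmetric])
  finally show ?thesis by (simp add: S)
qed



lemma peel:
  fixes I :: "nat set" and j a :: nat and c eps s :: real and P :: "(nat \<Rightarrow> real) \<Rightarrow> bool"
  assumes "s > 0" "eps > 0" "finite I" "j \<in> I" "a \<in> I" "a \<noteq> j"
    and PI[measurable]: "Measurable.pred (PiM I (\<lambda>_. density lborel (normal_density 0 s))) P"
    and PJ: "Measurable.pred (PiM (I - {j}) (\<lambda>_. density lborel (normal_density 0 s))) P"
    and Pj: "\<And>g y. P (g(j:=y)) = P g"
  shows "emeasure (PiM I (\<lambda>_. density lborel (normal_density 0 s)))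
           {g \<in> space (PiM I (\<lambda>_. density lborel (normal_density 0 s))). \<bar>g j - g a + c\<bar> \<le> eps \<and> P g}
         \<le> ennreal (eps/s) * emeasure (PiM (I-{j}) (\<lambda>_. density lborel (normal_density 0 s)))
           {g \<in> space (PiM (I-{j}) (\<lambda>_. density lborel (normal_density 0 s))). P g}"
proof -
  define N where "N = density lborel (normal_density 0 s)"
  have probN: "prob_space N" unfolding N_def using assms(1) by (rule prob_space_normal_density)
  interpret product_sigma_finite "\<lambda>_. N"
    unfolding product_sigma_finite_def using prob_space_imp_sigma_finite[OF probN] by simp
  define J where "J = I - {j}"
  have IJ: "I = insert j J" "j \<notin> J" "finite J" using assms J_def by auto
  define S where "S = {g \<in> space (PiM I (\<lambda>_. N)). \<bar>g j - g a + c\<bar> \<le> eps \<and> P g}"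
  define Q where "Q = {g \<in> space (PiM J (\<lambda>_. N)). P g}"
  have Ssets: "S \<in> sets (PiM I (\<lambda>_. N))" unfolding S_def N_def using assms(4,5) by measurable
  have Qsets: "Q \<in> sets (PiM J (\<lambda>_. N))" unfolding Q_def N_def J_def using PJ by measurable
  have "emeasure (PiM I (\<lambda>_. N)) S = (\<integral>\<^sup>+g. indicator S g \<partial>PiM I (\<lambda>_. N))"
    using Ssets by simp
  also have "\<dots> = (\<integral>\<^sup>+x. (\<integral>\<^sup>+y. indicator S (x(j:=y)) \<partial>N) \<partial>PiM J (\<lambda>_. N))"
    unfolding IJ(1) by (rule product_nn_integral_insert) (use IJ Ssets in auto)
  also have "\<dots> \<le> (\<integral>\<^sup>+x. ennreal (eps/s) * indicator Q x \<partial>PiM J (\<lambda>_. N))"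
  proof (rule nn_integral_mono)
    fix x assume x: "x \<in> space (PiM J (\<lambda>_. N))"
    have "x(j:=y) \<in> space (PiM I (\<lambda>_. N))" for y
      using x IJ by (auto simp: space_PiM PiE_iff extensional_def N_def)
    hence "indicator S (x(j:=y)) = (indicator Q x * indicator {y. \<bar>y - (x a - c)\<bar> \<le> eps} y :: ennreal)" for y
      using x assms(6) Pj by (auto simp: S_def Q_def indicator_def abs_diff_le_iff algebra_simps)
    hence "(\<integral>\<^sup>+y. indicator S (x(j:=y)) \<partial>N) = indicator Q x * emeasure N {y. \<bar>y - (x a - c)\<bar> \<le> eps}"
      by (simp add: nn_integral_cmult_indicator N_def)
    also have "\<dots> \<le> indicator Q x * ennreal (eps/s)"
      by (intro mult_left_mono) (use interval_bound[OF assms(1,2)] in \<open>auto simp: N_def\<close>)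
    finally show "(\<integral>\<^sup>+y. indicator S (x(j:=y)) \<partial>N) \<le> ennreal (eps/s) * indicator Q x"
      by (simp add: mult.commute)
  qed
  also have "\<dots> = ennreal (eps/s) * emeasure (PiM J (\<lambda>_. N)) Q"
    using Qsets by (simp add: nn_integral_cmult_indicator)
  finally show ?thesis unfolding S_def Q_def N_def J_def .
qed



lemma peel1:
  fixes I :: "nat set" and j a :: nat and c eps s :: real
  assumes "s > 0" "eps > 0" "finite I" "j \<in> I" "a \<in> I" "a \<noteq> j"
  shows "emeasure (PiM I (\<lambda>_. density lborel (normal_density 0 s)))
           {g \<in> space (PiM I (\<lambda>_. density lborel (normal_density 0 s))). \<bar>g j - g a + c\<bar> \<le> eps}
         \<le> ennreal (eps/s)"
proof -
  have pr: "prob_space (PiM (I-{j}) (\<lambda>_. density lborel (normal_density 0 s)))"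
    by (rule prob_space_PiM) (rule prob_space_normal_density[OF assms(1)])
  have "emeasure (PiM I (\<lambda>_. density lborel (normal_density 0 s)))
           {g \<in> space (PiM I (\<lambda>_. density lborel (normal_density 0 s))). \<bar>g j - g a + c\<bar> \<le> eps \<and> True}
         \<le> ennreal (eps/s) * emeasure (PiM (I-{j}) (\<lambda>_. density lborel (normal_density 0 s)))
           {g \<in> space (PiM (I-{j}) (\<lambda>_. density lborel (normal_density 0 s))). True}"
    by (rule peel[OF assms]) auto
  then show ?thesis using prob_space.emeasure_space_1[OF pr] by simp
qed

lemma pred_abs:
  fixes I :: "nat set" and k l :: nat and c eps s :: real
  assumes "k \<in> I" "l \<in> I"
  shows "Measurable.pred (PiM I (\<lambda>_. density lborel (normal_density 0 s))) (\<lambda>g. \<bar>g k - g l + c\<bar> \<le> eps)"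
  using assms by measurable

lemma E3_bound:
  fixes n i j k :: nat and c1 c2 eps s :: real
  assumes "s > 0" "eps > 0" "i < n" "j < n" "k < n" "i \<noteq> j" "i \<noteq> k" "j \<noteq> k"
  shows "emeasure (PiM {..<n} (\<lambda>_. density lborel (normal_density 0 s)))
           {g \<in> space (PiM {..<n} (\<lambda>_. density lborel (normal_density 0 s))).
              \<bar>g i - g j + c1\<bar> \<le> eps \<and> \<bar>g k - g j + c2\<bar> \<le> eps}
         \<le> ennreal (eps/s) * ennreal (eps/s)"
proof -
  have "emeasure (PiM {..<n} (\<lambda>_. density lborel (normal_density 0 s)))
           {g \<in> space (PiM {..<n} (\<lambda>_. density lborel (normal_density 0 s))).
              \<bar>g i - g j + c1\<bar> \<le> eps \<and> \<bar>g k - g j + c2\<bar> \<le> eps}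
     \<le> ennreal (eps/s) * emeasure (PiM ({..<n}-{i}) (\<lambda>_. density lborel (normal_density 0 s)))
           {g \<in> space (PiM ({..<n}-{i}) (\<lambda>_. density lborel (normal_density 0 s))). \<bar>g k - g j + c2\<bar> \<le> eps}"
    by (rule peel[OF assms(1,2)]) (use assms in \<open>auto intro!: pred_abs\<close>)
  also have "\<dots> \<le> ennreal (eps/s) * ennreal (eps/s)"
    by (intro mult_left_mono peel1) (use assms in auto)
  finally show ?thesis .
qed

lemma E4_bound:
  fixes n i j k l :: nat and c1 c2 eps s :: real
  assumes "s > 0" "eps > 0" "i < n" "j < n" "k < n" "l < n" "i \<noteq> j" "i \<noteq> k" "i \<noteq> l" "k \<noteq> l"
  shows "emeasure (PiM {..<n} (\<lambda>_. density lborel (normal_density 0 s)))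
           {g \<in> space (PiM {..<n} (\<lambda>_. density lborel (normal_density 0 s))).
              \<bar>g i - g j + c1\<bar> \<le> eps \<and> \<bar>g k - g l + c2\<bar> \<le> eps}
         \<le> ennreal (eps/s) * ennreal (eps/s)"
proof -
  have "emeasure (PiM {..<n} (\<lambda>_. density lborel (normal_density 0 s)))
           {g \<in> space (PiM {..<n} (\<lambda>_. density lborel (normal_density 0 s))).
              \<bar>g i - g j + c1\<bar> \<le> eps \<and> \<bar>g k - g l + c2\<bar> \<le> eps}
     \<le> ennreal (eps/s) * emeasure (PiM ({..<n}-{i}) (\<lambda>_. density lborel (normal_density 0 s)))
           {g \<in> space (PiM ({..<n}-{i}) (\<lambda>_. density lborel (normal_density 0 s))). \<bar>g k - g l + c2\<bar> \<le> eps}"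
    by (rule peel[OF assms(1,2)]) (use assms in \<open>auto intro!: pred_abs\<close>)
  also have "\<dots> \<le> ennreal (eps/s) * ennreal (eps/s)"
    by (intro mult_left_mono peel1) (use assms in auto)
  finally show ?thesis .
qed

lemma three_iff:
  fixes X :: "real set"
  assumes "finite X"
  shows "(\<exists>a. 3 \<le> card (X \<inter> {a..a+eps})) \<longleftrightarrow>
    (\<exists>u\<in>X. \<exists>v\<in>X. \<exists>w\<in>X. u \<noteq> v \<and> u \<noteq> w \<and> v \<noteq> w \<and> \<bar>u - v\<bar> \<le> eps \<and> \<bar>u - w\<bar> \<le> eps \<and> \<bar>v - w\<bar> \<le> eps)"
proof
  assume "\<exists>a. 3 \<le> card (X \<inter> {a..a+eps})"
  then obtain a where "3 \<le> card (X \<inter> {a..a+eps})" by blast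
  then obtain T where T: "T \<subseteq> X \<inter> {a..a+eps}" "card T = 3" by (meson obtain_subset_with_card_n)
  then obtain u v w where "T = {u,v,w}" "u \<noteq> v" "v \<noteq> w" "u \<noteq> w" by (auto simp: card_3_iff)
  with T(1) show "\<exists>u\<in>X. \<exists>v\<in>X. \<exists>w\<in>X. u \<noteq> v \<and> u \<noteq> w \<and> v \<noteq> w \<and> \<bar>u - v\<bar> \<le> eps \<and> \<bar>u - w\<bar> \<le> eps \<and> \<bar>v - w\<bar> \<le> eps"
    by (intro bexI[of _ u] bexI[of _ v] bexI[of _ w]) auto
next
  assume "\<exists>u\<in>X. \<exists>v\<in>X. \<exists>w\<in>X. u \<noteq> v \<and> u \<noteq> w \<and> v \<noteq> w \<and> \<bar>u - v\<bar> \<le> eps \<and> \<bar>u - w\<bar> \<le> eps \<and> \<bar>v - w\<bar> \<le> eps"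
  then obtain u v w where h: "u\<in>X" "v\<in>X" "w\<in>X" "u \<noteq> v" "u \<noteq> w" "v \<noteq> w" "\<bar>u - v\<bar> \<le> eps" "\<bar>u - w\<bar> \<le> eps" "\<bar>v - w\<bar> \<le> eps"
    by blast
  define a where "a = min u (min v w)"
  have sub: "{u,v,w} \<subseteq> X \<inter> {a..a+eps}" using h unfolding a_def by (auto simp: abs_if split: if_splits)
  have "card {u,v,w} = 3" using h by simp
  hence "3 \<le> card (X \<inter> {a..a+eps})" using card_mono[OF _ sub] assms by simp
  thus "\<exists>a. 3 \<le> card (X \<inter> {a..a+eps})" by blast
qed



lemma char:
  fixes f :: "nat \<Rightarrow> real" and A :: "nat set"
  assumes "finite A"
  shows "\<not> spreaded eps (f ` A) \<longleftrightarrow>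
    (\<exists>i\<in>A. \<exists>j\<in>A. \<exists>k\<in>A. f i \<noteq> f j \<and> f i \<noteq> f k \<and> f j \<noteq> f k \<and> \<bar>f i - f j\<bar> \<le> eps \<and> \<bar>f i - f k\<bar> \<le> eps \<and> \<bar>f j - f k\<bar> \<le> eps)
    \<or> (\<exists>i1\<in>A. \<exists>i2\<in>A. \<exists>i3\<in>A. \<exists>i4\<in>A. f i1 \<noteq> f i2 \<and> f i1 \<noteq> f i3 \<and> f i1 \<noteq> f i4 \<and> f i2 \<noteq> f i4 \<and> f i3 \<noteq> f i4
         \<and> \<bar>f i1 - f i2\<bar> \<le> eps \<and> \<bar>f i3 - f i4\<bar> \<le> eps)"
proof -
  have fin: "finite (f ` A \<inter> {a..a+eps})" for a using assms by simp
  have 1: "(\<exists>a. 3 \<le> card (f ` A \<inter> {a..a+eps}) \<or> infinite (f ` A \<inter> {a..a+eps}))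
     \<longleftrightarrow> (\<exists>a. 3 \<le> card (f ` A \<inter> {a..a+eps}))" using fin by blast
  have 2: "(\<exists>u\<in>f ` A. \<exists>v\<in>f ` A. \<exists>w\<in>f ` A. u \<noteq> v \<and> u \<noteq> w \<and> v \<noteq> w \<and> \<bar>u - v\<bar> \<le> eps \<and> \<bar>u - w\<bar> \<le> eps \<and> \<bar>v - w\<bar> \<le> eps)
    \<longleftrightarrow> (\<exists>i\<in>A. \<exists>j\<in>A. \<exists>k\<in>A. f i \<noteq> f j \<and> f i \<noteq> f k \<and> f j \<noteq> f k \<and> \<bar>f i - f j\<bar> \<le> eps \<and> \<bar>f i - f k\<bar> \<le> eps \<and> \<bar>f j - f k\<bar> \<le> eps)"
    by blast
  have 3: "(\<not> (\<forall>x1\<in>f ` A. \<forall>x2\<in>f ` A. \<forall>x3\<in>f ` A. \<forall>x4\<in>f ` A.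
        (x1 \<noteq> x2 \<and> x1 \<noteq> x3 \<and> x1 \<noteq> x4 \<and> x2 \<noteq> x4 \<and> x3 \<noteq> x4) \<longrightarrow>
        (\<bar>x1 - x2\<bar> > eps \<or> \<bar>x3 - x4\<bar> > eps)))
     \<longleftrightarrow> (\<exists>i1\<in>A. \<exists>i2\<in>A. \<exists>i3\<in>A. \<exists>i4\<in>A. f i1 \<noteq> f i2 \<and> f i1 \<noteq> f i3 \<and> f i1 \<noteq> f i4 \<and> f i2 \<noteq> f i4 \<and> f i3 \<noteq> f i4
         \<and> \<bar>f i1 - f i2\<bar> \<le> eps \<and> \<bar>f i3 - f i4\<bar> \<le> eps)"
    by (auto simp: not_less)
  show ?thesis
    unfolding spreaded_def de_Morgan_conj not_all not_not 1 three_iff[OF finite_imageI[OF assms]] 2 3 ..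
qed


lemma atom_eq:
  fixes I :: "nat set" and mu :: "nat \<Rightarrow> real"
  assumes "i \<in> I" "j \<in> I"
  shows "Measurable.pred (PiM I (\<lambda>_. density lborel (normal_density 0 s))) (\<lambda>g. mu i + g i = mu j + g j)"
proof -
  have "Measurable.pred (PiM I (\<lambda>_. density lborel (normal_density 0 s))) (\<lambda>g. (mu i + g i) - (mu j + g j) = 0)"
    using assms by measurable
  thus ?thesis by simp
qed
lemma atom_le:
  fixes I :: "nat set" and mu :: "nat \<Rightarrow> real"
  assumes "i \<in> I" "j \<in> I"
  shows "Measurable.pred (PiM I (\<lambda>_. density lborel (normal_density 0 s))) (\<lambda>g. \<bar>mu i + g i - (mu j + g j)\<bar> \<le> eps)"
  using assms by measurable


theorem lemma20:
  fixes s eps :: real and n :: nat and mu :: "nat \<Rightarrow> real"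
  assumes "s > 0" and "eps > 0"
    and "\<And>i. i < n \<Longrightarrow> mu i \<in> {0..1}"
  shows "{g \<in> space (gauss_vec n s). \<not> spreaded eps ((\<lambda>i. mu i + g i) ` {..<n})}
           \<in> sets (gauss_vec n s)
       \<and> measure (gauss_vec n s)
           {g \<in> space (gauss_vec n s). \<not> spreaded eps ((\<lambda>i. mu i + g i) ` {..<n})}
         \<le> 2 * real n ^ 4 * eps\<^sup>2 / s\<^sup>2"
proof -
  define M where "M = gauss_vec n s"
  have M: "M = PiM {..<n} (\<lambda>_. density lborel (normal_density 0 s))"
    unfolding M_def gauss_vec_def ..
  interpret prob_space M unfolding M
    by (rule prob_space_PiM) (rule prob_space_normal_density[OF assms(1)])
  define Bad where "Bad = {g \<in> space M. \<not> spreaded eps ((\<lambda>i. mu i + g i) ` {..<n})}"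
  have Bad_eq: "Bad = {g \<in> space M.
    (\<exists>i\<in>{..<n}. \<exists>j\<in>{..<n}. \<exists>k\<in>{..<n}. mu i + g i \<noteq> mu j + g j \<and> mu i + g i \<noteq> mu k + g k \<and> mu j + g j \<noteq> mu k + g k
        \<and> \<bar>(mu i + g i) - (mu j + g j)\<bar> \<le> eps \<and> \<bar>(mu i + g i) - (mu k + g k)\<bar> \<le> eps \<and> \<bar>(mu j + g j) - (mu k + g k)\<bar> \<le> eps)
    \<or> (\<exists>i1\<in>{..<n}. \<exists>i2\<in>{..<n}. \<exists>i3\<in>{..<n}. \<exists>i4\<in>{..<n}. mu i1 + g i1 \<noteq> mu i2 + g i2 \<and> mu i1 + g i1 \<noteq> mu i3 + g i3
        \<and> mu i1 + g i1 \<noteq> mu i4 + g i4 \<and> mu i2 + g i2 \<noteq> mu i4 + g i4 \<and> mu i3 + g i3 \<noteq> mu i4 + g i4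
         \<and> \<bar>(mu i1 + g i1) - (mu i2 + g i2)\<bar> \<le> eps \<and> \<bar>(mu i3 + g i3) - (mu i4 + g i4)\<bar> \<le> eps)}"
    unfolding Bad_def using char[of "{..<n}" eps "\<lambda>i. mu i + _ i"] by simp
  have Bad_sets: "Bad \<in> sets M" unfolding Bad_eq M pred_def[symmetric]
    by (intro pred_intros_finite pred_intros_logic atom_eq atom_le finite_lessThan) auto
  define E3 where "E3 = (\<lambda>(i::nat,j::nat,k::nat). {g \<in> space M. \<bar>g i - g j + (mu i - mu j)\<bar> \<le> eps \<and> \<bar>g k - g j + (mu k - mu j)\<bar> \<le> eps})"
  define E4 where "E4 = (\<lambda>(i::nat,j::nat,k::nat,l::nat). {g \<in> space M. \<bar>g i - g j + (mu i - mu j)\<bar> \<le> eps \<and> \<bar>g k - g l + (mu k - mu l)\<bar> \<le> eps})"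
  define T3 where "T3 = {(i,j,k). i < n \<and> j < n \<and> k < n \<and> i \<noteq> j \<and> i \<noteq> k \<and> j \<noteq> k}"
  define T4 where "T4 = {(i,j,k,l). i < n \<and> j < n \<and> k < n \<and> l < n \<and> i \<noteq> j \<and> i \<noteq> k \<and> i \<noteq> l \<and> j \<noteq> k \<and> j \<noteq> l \<and> k \<noteq> l}"
  have T3sub: "T3 \<subseteq> {..<n} \<times> {..<n} \<times> {..<n}" unfolding T3_def by auto
  have T4sub: "T4 \<subseteq> {..<n} \<times> {..<n} \<times> {..<n} \<times> {..<n}" unfolding T4_def by auto
  have finT3: "finite T3" by (rule finite_subset[OF T3sub]) auto
  have finT4: "finite T4" by (rule finite_subset[OF T4sub]) auto
  have cT3: "card T3 \<le> n^3"
    using card_mono[OF _ T3sub] by (simp add: card_cartesian_product power3_eq_cube)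
  have cT4: "card T4 \<le> n^4"
    using card_mono[OF _ T4sub] by (simp add: card_cartesian_product power4_eq_xxxx)
  have E3sets: "E3 t \<in> sets M" if "t \<in> T3" for t
  proof -
    obtain i j k where t: "t = (i,j,k)" by (cases t)
    show ?thesis using that unfolding t E3_def M T3_def pred_def[symmetric]
      by (simp; (intro pred_intros_logic pred_abs)?)
  qed
  have E4sets: "E4 t \<in> sets M" if "t \<in> T4" for t
  proof -
    obtain i j k l where t: "t = (i,j,k,l)" by (cases t)
    show ?thesis using that unfolding t E4_def M T4_def pred_def[symmetric]
      by (simp; (intro pred_intros_logic pred_abs)?)
  qed
  define b where "b = eps/s * (eps/s)"
  have b_nn: "0 \<le> b" unfolding b_def using assms by simp
  have mE3: "measure M (E3 t) \<le> b" if "t \<in> T3" for t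
  proof -
    obtain i j k where t: "t = (i,j,k)" by (cases t)
    have "ennreal (measure M (E3 t)) = emeasure M (E3 t)" by (simp add: emeasure_eq_measure)
    also have "\<dots> \<le> ennreal (eps/s) * ennreal (eps/s)"
      unfolding t E3_def M using that t T3_def by (simp, intro E3_bound[OF assms(1,2)]) auto
    also have "\<dots> = ennreal b" unfolding b_def by (rule ennreal_mult[symmetric]) (use assms in auto)
    finally show ?thesis using b_nn by simp
  qed
  have mE4: "measure M (E4 t) \<le> b" if "t \<in> T4" for t
  proof -
    obtain i j k l where t: "t = (i,j,k,l)" by (cases t)
    have "ennreal (measure M (E4 t)) = emeasure M (E4 t)" by (simp add: emeasure_eq_measure)
    also have "\<dots> \<le> ennreal (eps/s) * ennreal (eps/s)"
      unfolding t E4_def M using that t T4_def by (simp, intro E4_bound[OF assms(1,2)]) auto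
    also have "\<dots> = ennreal b" unfolding b_def by (rule ennreal_mult[symmetric]) (use assms in auto)
    finally show ?thesis using b_nn by simp
  qed
  have cover: "Bad \<subseteq> (\<Union>t\<in>T3. E3 t) \<union> (\<Union>t\<in>T4. E4 t)"
  proof
    fix g assume "g \<in> Bad"
    then have gs: "g \<in> space M" and disj: "(\<exists>i\<in>{..<n}. \<exists>j\<in>{..<n}. \<exists>k\<in>{..<n}. mu i + g i \<noteq> mu j + g j \<and> mu i + g i \<noteq> mu k + g k \<and> mu j + g j \<noteq> mu k + g k
        \<and> \<bar>(mu i + g i) - (mu j + g j)\<bar> \<le> eps \<and> \<bar>(mu i + g i) - (mu k + g k)\<bar> \<le> eps \<and> \<bar>(mu j + g j) - (mu k + g k)\<bar> \<le> eps)
    \<or> (\<exists>i1\<in>{..<n}. \<exists>i2\<in>{..<n}. \<exists>i3\<in>{..<n}. \<exists>i4\<in>{..<n}. mu i1 + g i1 \<noteq> mu i2 + g i2 \<and> mu i1 + g i1 \<noteq> mu i3 + g i3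
        \<and> mu i1 + g i1 \<noteq> mu i4 + g i4 \<and> mu i2 + g i2 \<noteq> mu i4 + g i4 \<and> mu i3 + g i3 \<noteq> mu i4 + g i4
         \<and> \<bar>(mu i1 + g i1) - (mu i2 + g i2)\<bar> \<le> eps \<and> \<bar>(mu i3 + g i3) - (mu i4 + g i4)\<bar> \<le> eps)"
      unfolding Bad_eq by auto
    show "g \<in> (\<Union>t\<in>T3. E3 t) \<union> (\<Union>t\<in>T4. E4 t)"
      using disj
    proof (elim disjE bexE conjE)
      fix i j k assume h: "i \<in> {..<n}" "j \<in> {..<n}" "k \<in> {..<n}" "mu i + g i \<noteq> mu j + g j" "mu i + g i \<noteq> mu k + g k"
        "mu j + g j \<noteq> mu k + g k" "\<bar>(mu i + g i) - (mu j + g j)\<bar> \<le> eps" "\<bar>(mu i + g i) - (mu k + g k)\<bar> \<le> eps"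
        "\<bar>(mu j + g j) - (mu k + g k)\<bar> \<le> eps"
      have "(i,j,k) \<in> T3" using h unfolding T3_def by auto
      moreover have "g \<in> E3 (i,j,k)" using h gs unfolding E3_def by (auto simp: abs_minus_commute algebra_simps)
      ultimately show ?thesis by blast
    next
      fix i1 i2 i3 i4 assume h: "i1 \<in> {..<n}" "i2 \<in> {..<n}" "i3 \<in> {..<n}" "i4 \<in> {..<n}"
        "mu i1 + g i1 \<noteq> mu i2 + g i2" "mu i1 + g i1 \<noteq> mu i3 + g i3"
        "mu i1 + g i1 \<noteq> mu i4 + g i4" "mu i2 + g i2 \<noteq> mu i4 + g i4" "mu i3 + g i3 \<noteq> mu i4 + g i4"
        "\<bar>(mu i1 + g i1) - (mu i2 + g i2)\<bar> \<le> eps" "\<bar>(mu i3 + g i3) - (mu i4 + g i4)\<bar> \<le> eps"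
      show ?thesis
      proof (cases "mu i2 + g i2 = mu i3 + g i3")
        case True
        have "(i1,i2,i4) \<in> T3" using h unfolding T3_def by auto
        moreover have "g \<in> E3 (i1,i2,i4)" using h gs True unfolding E3_def
          by (auto simp: abs_minus_commute algebra_simps)
        ultimately show ?thesis by blast
      next
        case False
        have "(i1,i2,i3,i4) \<in> T4" using h False unfolding T4_def by auto
        moreover have "g \<in> E4 (i1,i2,i3,i4)" using h gs unfolding E4_def
          by (auto simp: abs_minus_commute algebra_simps)
        ultimately show ?thesis by blast
      qed
    qed
  qed
  have "measure M Bad \<le> measure M ((\<Union>t\<in>T3. E3 t) \<union> (\<Union>t\<in>T4. E4 t))"
    by (rule finite_measure_mono[OF cover]) (use E3sets E4sets finT3 finT4 in auto)
  also have "\<dots> \<le> measure M (\<Union>t\<in>T3. E3 t) + measure M (\<Union>t\<in>T4. E4 t)"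
    by (rule measure_Un_le) (use E3sets E4sets finT3 finT4 in auto)
  also have "\<dots> \<le> (\<Sum>t\<in>T3. measure M (E3 t)) + (\<Sum>t\<in>T4. measure M (E4 t))"
    by (intro add_mono measure_subadditive_finite) (use E3sets E4sets finT3 finT4 in auto)
  also have "\<dots> \<le> (\<Sum>t\<in>T3. b) + (\<Sum>t\<in>T4. b)"
    by (intro add_mono sum_mono mE3 mE4)
  also have "\<dots> = real (card T3) * b + real (card T4) * b" by simp
  also have "\<dots> \<le> real n ^ 3 * b + real n ^ 4 * b"
    using cT3 cT4 b_nn by (intro add_mono mult_right_mono) (simp_all add: of_nat_le_iff[symmetric])
  also have "\<dots> \<le> 2 * real n ^ 4 * b"
  proof -
    have "real n ^ 3 \<le> real n ^ 4"
      by (cases "n = 0") (auto intro!: power_increasing)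
    thus ?thesis using b_nn by (simp add: algebra_simps mult_left_mono)
  qed
  also have "\<dots> = 2 * real n ^ 4 * eps\<^sup>2 / s\<^sup>2" unfolding b_def by (simp add: power2_eq_square)
  finally show ?thesis using Bad_sets unfolding Bad_def M_def by simp
qed


end
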